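(* Let $a$ be a tile of an additive poset $A$ and let $I$ be the set of all atoms of $A$ lying in the tail $A_a$. Then the map $2^I_f\to A$, $J\mapsto\sum_{j\in J} j$, is an isomorphism of additive posets from the restricted additive powerset $2^I_f$ onto the additive subposet of $A_a$ generated by $I$ as a $\mathbb{Z}/2\mathbb{Z}$-vector space.
   Context: An additive poset is a pair $(A,\le)$ where $A$ is an abelian group and $\le$ is a partial order on $A$ such that for all $a,b,c\in A$: $(\ast)$ if $b\le a$ and $c\le a$ then $b+c\le a$; $(\ast\ast)$ if $a\le b$ and $a\le c$ then $a\le a+b+c$. Every subgroup with the restricted order is an additive poset (an additive subposet). An isomorphism of additive posets is a bijection that is both a group isomorphism and an order isomorphism. The tail of $a$ is $A_a=\{x:x\le a\}$. Elements $x,y$ are independent if $x\le x+y$. An atom is a nonzero $x$ with $A_x=\{0,x\}$. A tile is a nonzero $a$ such that any two distinct atoms of $A$ in $A_a$ are independent. For a set $I$, $2^I_f$ is the set of finite subsets of $I$ with symmetric difference as addition and inclusion as partial order. *)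

theory Defs
  imports Main
begin

definition additive_poset :: "('a::ab_group_add \<Rightarrow> 'a \<Rightarrow> bool) \<Rightarrow> bool" where
  "additive_poset le \<longleftrightarrow>
     (\<forall>x. le x x) \<and> (\<forall>x y. le x y \<and> le y x \<longrightarrow> x = y) \<and>
     (\<forall>x y z. le x y \<and> le y z \<longrightarrow> le x z) \<and>
     (\<forall>a b c. le b a \<and> le c a \<longrightarrow> le (b + c) a) \<and>
     (\<forall>a b c. le a b \<and> le a c \<longrightarrow> le a (a + b + c))"

definition tail :: "('a \<Rightarrow> 'a \<Rightarrow> bool) \<Rightarrow> 'a \<Rightarrow> 'a set" where
  "tail le a = {x. le x a}"

definition independent :: "('a::ab_group_add \<Rightarrow> 'a \<Rightarrow> bool) \<Rightarrow> 'a \<Rightarrow> 'a \<Rightarrow> bool" where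
  "independent le x y \<longleftrightarrow> le x (x + y)"

definition atom :: "('a::ab_group_add \<Rightarrow> 'a \<Rightarrow> bool) \<Rightarrow> 'a \<Rightarrow> bool" where
  "atom le x \<longleftrightarrow> x \<noteq> 0 \<and> tail le x = {0, x}"

definition tile :: "('a::ab_group_add \<Rightarrow> 'a \<Rightarrow> bool) \<Rightarrow> 'a \<Rightarrow> bool" where
  "tile le a \<longleftrightarrow> a \<noteq> 0 \<and>
     (\<forall>x y. atom le x \<and> atom le y \<and> x \<in> tail le a \<and> y \<in> tail le a \<and> x \<noteq> y
        \<longrightarrow> independent le x y)"

text \<open>Finite subsets of I (carrier of the additive powerset 2^I_f), with symmetric difference.\<close>
definition fin_subsets :: "'b set \<Rightarrow> 'b set set" where
  "fin_subsets I = {J. finite J \<and> J \<subseteq> I}"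

definition symdiff :: "'b set \<Rightarrow> 'b set \<Rightarrow> 'b set" where
  "symdiff J K = (J - K) \<union> (K - J)"

text \<open>The subgroup generated by a set S (for elements of order 2, as here, this is
  the Z/2Z-span of S).\<close>
inductive_set gen_subgroup :: "'a::ab_group_add set \<Rightarrow> 'a set" for S where
  zero: "0 \<in> gen_subgroup S"
| gen: "x \<in> S \<Longrightarrow> x \<in> gen_subgroup S"
| add: "x \<in> gen_subgroup S \<Longrightarrow> y \<in> gen_subgroup S \<Longrightarrow> x + y \<in> gen_subgroup S"
| neg: "x \<in> gen_subgroup S \<Longrightarrow> - x \<in> gen_subgroup S"

definition addposet_iso ::
  "'b set \<Rightarrow> ('b \<Rightarrow> 'b \<Rightarrow> 'b) \<Rightarrow> ('b \<Rightarrow> 'b \<Rightarrow> bool) \<Rightarrow>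
   'c set \<Rightarrow> ('c \<Rightarrow> 'c \<Rightarrow> 'c) \<Rightarrow> ('c \<Rightarrow> 'c \<Rightarrow> bool) \<Rightarrow> ('b \<Rightarrow> 'c) \<Rightarrow> bool" where
  "addposet_iso B addB leB C addC leC f \<longleftrightarrow>
     bij_betw f B C \<and>
     (\<forall>x\<in>B. \<forall>y\<in>B. f (addB x y) = addC (f x) (f y)) \<and>
     (\<forall>x\<in>B. \<forall>y\<in>B. leB x y \<longleftrightarrow> leC (f x) (f y))"

end

theory Submission
  imports Defs
begin

lemma ap_refl: "additive_poset le \<Longrightarrow> le x x"
  by (simp add: additive_poset_def)
lemma ap_antisym: "additive_poset le \<Longrightarrow> le x y \<Longrightarrow> le y x \<Longrightarrow> x = y"
  unfolding additive_poset_def by blast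
lemma ap_trans: "additive_poset le \<Longrightarrow> le x y \<Longrightarrow> le y z \<Longrightarrow> le x z"
  unfolding additive_poset_def by blast
lemma ap_s1: "additive_poset le \<Longrightarrow> le b a \<Longrightarrow> le c a \<Longrightarrow> le (b + c) a"
  unfolding additive_poset_def by blast
lemma ap_s2: "additive_poset le \<Longrightarrow> le a b \<Longrightarrow> le a c \<Longrightarrow> le a (a + b + c)"
  unfolding additive_poset_def by blast

lemma ap_two: fixes le :: "'a::ab_group_add \<Rightarrow> 'a \<Rightarrow> bool" and x :: 'a assumes "additive_poset le" shows "x + x = 0"
proof -
  have r: "le x x" using ap_refl[OF assms] .
  have "le (x+x) x" using ap_s1[OF assms r r] .
  then have 1: "le (x+x+x) x" using ap_s1[OF assms _ r] by blast
  have 2: "le x (x+x+x)" using ap_s2[OF assms r r] .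
  have "x+x+x = x" using ap_antisym[OF assms 1 2] .
  then show ?thesis by (metis add_right_imp_eq add_0)
qed

lemma ap_zero: assumes "additive_poset le" shows "le 0 x"
  using ap_s1[OF assms ap_refl[OF assms] ap_refl[OF assms], of x] ap_two[OF assms, of x] by simp

lemma sum_below: assumes "additive_poset le" "finite S" "\<forall>k\<in>S. le k a"
  shows "le (\<Sum>S) a"
  using assms(2,3)
proof (induction S rule: finite_induct)
  case empty then show ?case using ap_zero[OF assms(1)] by simp
next
  case (insert x F) then show ?case using ap_s1[OF assms(1)] by (simp add: add.commute)
qed

lemma indep_sum: assumes "additive_poset le" "finite S" "\<forall>k\<in>S. le j (j + k)"
  shows "le j (j + \<Sum>S)"
  using assms(2,3)
proof (induction S rule: finite_induct)
  case empty then show ?case using ap_refl[OF assms(1)] by simp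
next
  case (insert x F)
  then have "le j (j + (j + \<Sum>F) + (j + x))" using ap_s2[OF assms(1)] by simp
  moreover have "j + (j + \<Sum>F) + (j + x) = j + (x + \<Sum>F)"
    using ap_two[OF assms(1), of j] by (simp add: algebra_simps)
  ultimately show ?case using insert by simp
qed

lemma sum_symdiff: fixes le :: "'a::ab_group_add \<Rightarrow> 'a \<Rightarrow> bool" and J K :: "'a set"
  assumes "additive_poset le" "finite J" "finite K"
  shows "(\<Sum>(symdiff J K)) = (\<Sum>J) + (\<Sum>K)"
proof -
  have eJ: "\<Sum>J = \<Sum>(J-K) + \<Sum>(J\<inter>K)"
    using sum.Int_Diff[OF assms(2), of "\<lambda>x. x" K] by (simp add: add.commute)
  have eK: "\<Sum>K = \<Sum>(K-J) + \<Sum>(J\<inter>K)"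
    using sum.Int_Diff[OF assms(3), of "\<lambda>x. x" J] by (simp add: add.commute Int_commute)
  have "\<Sum>(symdiff J K) = \<Sum>(J-K) + \<Sum>(K-J)" unfolding symdiff_def
    by (rule sum.union_disjoint) (use assms in auto)
  also have "\<dots> = \<Sum>J + \<Sum>K" using eJ eK ap_two[OF assms(1), of "\<Sum>(J\<inter>K)"]
    by (simp add: algebra_simps)
  finally show ?thesis .
qed

theorem theorem5p2:
  fixes le :: "'a::ab_group_add \<Rightarrow> 'a \<Rightarrow> bool" and a :: 'a
  assumes "additive_poset le"
    and "tile le a"
  defines "I \<equiv> {x. atom le x \<and> x \<in> tail le a}"
  shows "addposet_iso (fin_subsets I) symdiff (\<subseteq>)
           (gen_subgroup I) (+) le (\<lambda>J. \<Sum>j\<in>J. j)"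
proof -
  note ap = assms(1)
  have ind: "le j (j + k)" if "j \<in> I" "k \<in> I" "j \<noteq> k" for j k
    using assms(2) that unfolding I_def tile_def independent_def by blast
  have nz: "j \<noteq> 0" if "j \<in> I" for j using that unfolding I_def atom_def by blast
  have jj: "le j (j + \<Sum>(K - {j}))" if "j \<in> I" "finite K" "K \<subseteq> I" for j K
    using indep_sum[OF ap, of "K - {j}" j] ind that by blast
  have mem: "le j (\<Sum>K)" if "j \<in> K" "finite K" "K \<subseteq> I" for j K
  proof -
    have "\<Sum>K = j + \<Sum>(K - {j})" using that by (simp add: sum.remove)
    then show ?thesis using jj[of j K] that by auto
  qed
  have nmem: "\<not> le j (\<Sum>K)" if "j \<in> I" "j \<notin> K" "finite K" "K \<subseteq> I" for j K
  proof
    assume h: "le j (\<Sum>K)"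
    have "K - {j} = K" using that by auto
    then have "le j (j + \<Sum>K)" using jj[of j K] that by simp
    then have "le j (j + \<Sum>K + (j + \<Sum>K))" using ap_s2[OF ap h] by (metis add.commute)
    then have "le j 0" using ap_two[OF ap, of "j + \<Sum>K"] by (metis add.assoc)
    then have "j = 0" using ap_antisym[OF ap _ ap_zero[OF ap]] by blast
    then show False using nz that by blast
  qed
  have ord: "J \<subseteq> K \<longleftrightarrow> le (\<Sum>J) (\<Sum>K)" if "J \<in> fin_subsets I" "K \<in> fin_subsets I" for J K
  proof
    assume "J \<subseteq> K"
    then show "le (\<Sum>J) (\<Sum>K)" using sum_below[OF ap, of J "\<Sum>K"] mem that
      unfolding fin_subsets_def by blast
  next
    assume h: "le (\<Sum>J) (\<Sum>K)"
    show "J \<subseteq> K"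
    proof
      fix j assume "j \<in> J"
      then have "le j (\<Sum>J)" using mem that unfolding fin_subsets_def by blast
      then have "le j (\<Sum>K)" using ap_trans[OF ap _ h] by blast
      then show "j \<in> K" using nmem[of j K] that \<open>j \<in> J\<close> unfolding fin_subsets_def by blast
    qed
  qed
  have inj: "inj_on (\<lambda>J. \<Sum>j\<in>J. j) (fin_subsets I)"
  proof (rule inj_onI)
    fix J K assume "J \<in> fin_subsets I" "K \<in> fin_subsets I" "(\<Sum>j\<in>J. j) = (\<Sum>j\<in>K. j)"
    then show "J = K" using ord ap_refl[OF ap] by (metis subset_antisym)
  qed
  have img1: "(\<Sum>J) \<in> gen_subgroup I" if "finite J" "J \<subseteq> I" for J
    using that
  proof (induction J rule: finite_induct)
    case empty then show ?case by (simp add: gen_subgroup.zero)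
  next
    case (insert x F) then show ?case by (simp add: gen_subgroup.add gen_subgroup.gen)
  qed
  have img2: "\<exists>J\<in>fin_subsets I. x = \<Sum>J" if "x \<in> gen_subgroup I" for x
    using that
  proof (induction rule: gen_subgroup.induct)
    case zero then show ?case by (rule bexI[of _ "{}"]) (auto simp: fin_subsets_def)
  next
    case (gen x) then show ?case by (intro bexI[of _ "{x}"]) (auto simp: fin_subsets_def)
  next
    case (add x y)
    then obtain J K where "J \<in> fin_subsets I" "K \<in> fin_subsets I" "x = \<Sum>J" "y = \<Sum>K" by blast
    then show ?case using sum_symdiff[OF ap, of J K]
      by (intro bexI[of _ "symdiff J K"]) (auto simp: fin_subsets_def symdiff_def)
  next
    case (neg x)
    have "- x = x" using ap_two[OF ap, of x] by (simp add: add_eq_0_iff)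
    then show ?case using neg by simp
  qed
  have bij: "bij_betw (\<lambda>J. \<Sum>j\<in>J. j) (fin_subsets I) (gen_subgroup I)"
    unfolding bij_betw_def using inj img1 img2 by (auto simp: fin_subsets_def)
  have hom: "\<forall>x\<in>fin_subsets I. \<forall>y\<in>fin_subsets I. (\<Sum>j\<in>symdiff x y. j) = (\<Sum>j\<in>x. j) + (\<Sum>j\<in>y. j)"
  proof (intro ballI)
    fix x y assume "x \<in> fin_subsets I" "y \<in> fin_subsets I"
    then have "finite x" "finite y" unfolding fin_subsets_def by auto
    then show "(\<Sum>j\<in>symdiff x y. j) = (\<Sum>j\<in>x. j) + (\<Sum>j\<in>y. j)" using sum_symdiff[OF ap] by blast
  qed
  have ordb: "\<forall>x\<in>fin_subsets I. \<forall>y\<in>fin_subsets I. x \<subseteq> y \<longleftrightarrow> le (\<Sum>j\<in>x. j) (\<Sum>j\<in>y. j)"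
    using ord by blast
  show ?thesis unfolding addposet_iso_def
    using bij hom ordb by blast
qed

end
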